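(* Let $\pi$ be a stationary deterministic memoryless policy, $\hat q:\mathcal{S}\times\mathcal{A}\to\mathbb{R}$, $\omega>0$, $\Delta\ge0$, $\mathcal{S}_{\text{fix}}\subseteq\mathcal{S}$, and $\pi'=\pi_{\hat q,\pi,\mathcal{S}_{\text{fix}}}$. Assume $|\hat q(s,a)-q^\pi(s,a)|\le\omega$ for all $s\in\mathcal{S}\setminus\mathcal{S}_{\text{fix}}$ and $a\in\mathcal{A}$, and that $\pi$ is next-state $\Delta$-optimal on $\mathcal{S}\setminus\mathcal{S}_{\text{fix}}$. Then $\pi'$ is $(4\omega+\gamma\Delta)$-optimal on $\mathcal{S}\setminus\mathcal{S}_{\text{fix}}$.
   Context: An MDP is $M=(\mathcal{S},\mathcal{A},\mathcal{Q})$ with measurable state space $\mathcal{S}$, finite action set $\mathcal{A}=(\mathcal{A}_1,\dots,\mathcal{A}_{|\mathcal{A}|})$ (with a fixed ordering), and transition-reward kernel $\mathcal{Q}$ with marginals $P(\cdot|s,a)$ (next state) and reward distribution supported on $[0,1]$, $r(s,a)$ the mean reward; discount $\gamma\in(0,1)$. $v^\pi(s)=\mathbb{E}_{\pi,s}[\sum_{t\ge0}\gamma^tR_t]$, $q^\pi(s,a)=\mathbb{E}_{\pi,s,a}[\sum_{t\ge0}\gamma^tR_t]$; $v^\star=\sup_\pi v^\pi$ (attained by a stationary deterministic policy). A policy $\pi$ is $\Delta$-optimal on $\mathcal{S}'\subseteq\mathcal{S}$ if $v^\star(s)-v^\pi(s)\le\Delta$ for all $s\in\mathcal{S}'$; it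 is next-state $\Delta$-optimal on $\mathcal{S}'$ if $\int(v^\star(s')-v^\pi(s'))\,dP(s'|s,a)\le\Delta$ for all $s\in\mathcal{S}'$, $a\in\mathcal{A}$. CAPI update: $\pi_{\hat q,\pi,\mathcal{S}_{\text{fix}}}(s)=\arg\max_{a}\hat q(s,a)$ (ties broken by smallest index) if $s\notin\mathcal{S}_{\text{fix}}$ and $\hat q(s,\pi(s))+\omega<\max_a\hat q(s,a)-\omega$, and $=\pi(s)$ otherwise. *)

theory Defs
  imports "HOL-Probability.Probability"
begin

text \<open>MDP data: state space S (a measure space, only its sigma-algebra matters),
 finite linearly ordered action type 'a (the order is the fixed action ordering),
 transition kernel P s a (a probability measure on S), mean reward r s a,
 discount gamma.\<close>

definition stationary_policies :: "'s measure \<Rightarrow> ('s \<Rightarrow> 'a) set" where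
  "stationary_policies S = S \<rightarrow>\<^sub>M count_space UNIV"

definition Ppol :: "('s \<Rightarrow> 'a \<Rightarrow> 's measure) \<Rightarrow> ('s \<Rightarrow> 'a) \<Rightarrow> ('s \<Rightarrow> real) \<Rightarrow> 's \<Rightarrow> real" where
  "Ppol P p f s = integral\<^sup>L (P s (p s)) f"

text \<open>v^p(s) = sum_t gamma^t E_{p,s}[R_t], with E_{p,s}[R_t] = (P_pi^t r_pi)(s).\<close>
definition v_pol :: "('s \<Rightarrow> 'a \<Rightarrow> 's measure) \<Rightarrow> ('s \<Rightarrow> 'a \<Rightarrow> real) \<Rightarrow> real \<Rightarrow> ('s \<Rightarrow> 'a) \<Rightarrow> 's \<Rightarrow> real" where
  "v_pol P r \<gamma> p s = (\<Sum>t. \<gamma> ^ t * ((Ppol P p ^^ t) (\<lambda>s'. r s' (p s')) s))"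

definition q_pol :: "('s \<Rightarrow> 'a \<Rightarrow> 's measure) \<Rightarrow> ('s \<Rightarrow> 'a \<Rightarrow> real) \<Rightarrow> real \<Rightarrow> ('s \<Rightarrow> 'a) \<Rightarrow> 's \<Rightarrow> 'a \<Rightarrow> real" where
  "q_pol P r \<gamma> p s a = r s a + \<gamma> * integral\<^sup>L (P s a) (v_pol P r \<gamma> p)"

definition v_star :: "'s measure \<Rightarrow> ('s \<Rightarrow> 'a \<Rightarrow> 's measure) \<Rightarrow> ('s \<Rightarrow> 'a \<Rightarrow> real) \<Rightarrow> real \<Rightarrow> 's \<Rightarrow> real" where
  "v_star S P r \<gamma> s = (SUP p\<in>stationary_policies S. v_pol P r \<gamma> p s)"

definition delta_optimal_on ::
  "'s measure \<Rightarrow> ('s \<Rightarrow> 'a \<Rightarrow> 's measure) \<Rightarrow> ('s \<Rightarrow> 'a \<Rightarrow> real) \<Rightarrow> real \<Rightarrow> ('s \<Rightarrow> 'a) \<Rightarrow> real \<Rightarrow> 's set \<Rightarrow> bool" where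
  "delta_optimal_on S P r \<gamma> p \<Delta> S' \<longleftrightarrow>
     (\<forall>s\<in>S'. v_star S P r \<gamma> s - v_pol P r \<gamma> p s \<le> \<Delta>)"

definition next_state_delta_optimal_on ::
  "'s measure \<Rightarrow> ('s \<Rightarrow> 'a \<Rightarrow> 's measure) \<Rightarrow> ('s \<Rightarrow> 'a \<Rightarrow> real) \<Rightarrow> real \<Rightarrow> ('s \<Rightarrow> 'a) \<Rightarrow> real \<Rightarrow> 's set \<Rightarrow> bool" where
  "next_state_delta_optimal_on S P r \<gamma> p \<Delta> S' \<longleftrightarrow>
     (\<forall>s\<in>S'. \<forall>a. integral\<^sup>L (P s a) (\<lambda>s'. v_star S P r \<gamma> s' - v_pol P r \<gamma> p s') \<le> \<Delta>)"

definition capi_update ::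
  "('s \<Rightarrow> 'a::{finite,linorder} \<Rightarrow> real) \<Rightarrow> ('s \<Rightarrow> 'a) \<Rightarrow> 's set \<Rightarrow> real \<Rightarrow> 's \<Rightarrow> 'a" where
  "capi_update qh p Sfix \<omega> s =
     (if s \<notin> Sfix \<and> qh s (p s) + \<omega> < Max (range (qh s)) - \<omega>
      then (LEAST a. qh s a = Max (range (qh s)))
      else p s)"

end

theory Submission
  imports Defs
begin

locale mdp =
  fixes S :: "'s measure"
    and P :: "'s \<Rightarrow> 'a::{finite,linorder} \<Rightarrow> 's measure"
    and r :: "'s \<Rightarrow> 'a \<Rightarrow> real"
    and \<gamma> :: real
  assumes kernel: "\<And>a. (\<lambda>s. P s a) \<in> S \<rightarrow>\<^sub>M prob_algebra S"
    and r_meas: "\<And>a. (\<lambda>s. r s a) \<in> borel_measurable S"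
    and r_bounds: "\<And>s a. 0 \<le> r s a \<and> r s a \<le> 1"
    and gamma0: "0 < \<gamma>" and gamma1: "\<gamma> < 1"
begin

lemma Ps: "s \<in> space S \<Longrightarrow> sets (P s a) = sets S \<and> prob_space (P s a)"
  using measurable_space[OF kernel[of a]] by (auto simp: space_prob_algebra)

lemma space_P: "s \<in> space S \<Longrightarrow> space (P s a) = space S"
  using Ps sets_eq_imp_space_eq by blast

lemma meas_P: "s \<in> space S \<Longrightarrow> f \<in> borel_measurable S \<Longrightarrow> f \<in> borel_measurable (P s a)"
  using Ps measurable_cong_sets by blast

lemma integ_P:
  fixes f :: "'s \<Rightarrow> real"
  assumes s: "s \<in> space S" and f: "f \<in> borel_measurable S" and b: "\<And>x. x \<in> space S \<Longrightarrow> \<bar>f x\<bar> \<le> B"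
  shows "integrable (P s a) f"
proof -
  interpret prob_space "P s a" using Ps[OF s] by blast
  show ?thesis
    by (rule integrable_const_bound[where B=B]) (auto simp: space_P[OF s] b meas_P[OF s f])
qed

lemma int_bounds:
  fixes f :: "'s \<Rightarrow> real"
  assumes s: "s \<in> space S" and f: "f \<in> borel_measurable S"
    and b: "\<And>x. x \<in> space S \<Longrightarrow> lo \<le> f x \<and> f x \<le> hi"
  shows "lo \<le> integral\<^sup>L (P s a) f \<and> integral\<^sup>L (P s a) f \<le> hi"
proof -
  interpret prob_space "P s a" using Ps[OF s] by blast
  have i: "integrable (P s a) f"
    by (rule integ_P[OF s f, where B="\<bar>lo\<bar> + \<bar>hi\<bar>"]) (use b in force)
  have a1: "AE x in P s a. lo \<le> f x" by (rule AE_I2) (use b in \<open>auto simp: space_P[OF s]\<close>)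
  have a2: "AE x in P s a. f x \<le> hi" by (rule AE_I2) (use b in \<open>auto simp: space_P[OF s]\<close>)
  show ?thesis
    using integral_ge_const[OF i a1] integral_le_const[OF i a2] by auto
qed

lemma meas_int_a:
  fixes f :: "'s \<Rightarrow> real"
  assumes f: "f \<in> borel_measurable S"
  shows "(\<lambda>s. integral\<^sup>L (P s a) f) \<in> borel_measurable S"
  by (rule measurable_compose[OF measurable_prob_algebraD[OF kernel] integral_measurable_subprob_algebra[OF f]])

definition pol :: "('s \<Rightarrow> 'a) \<Rightarrow> bool" where "pol p \<longleftrightarrow> p \<in> S \<rightarrow>\<^sub>M count_space UNIV"

lemma meas_Ppol: "pol p \<Longrightarrow> f \<in> borel_measurable S \<Longrightarrow> Ppol P p f \<in> borel_measurable S"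
  unfolding Ppol_def pol_def
  by (rule measurable_compose_countable[where f="\<lambda>a s. integral\<^sup>L (P s a) f"], erule meas_int_a, assumption)

lemma meas_rp: "pol p \<Longrightarrow> (\<lambda>s. r s (p s)) \<in> borel_measurable S"
  unfolding pol_def
  by (rule measurable_compose_countable[where f="\<lambda>a s. r s a"], rule r_meas, assumption)

lemma iter: "pol p \<Longrightarrow> (Ppol P p ^^ t) (\<lambda>s'. r s' (p s')) \<in> borel_measurable S \<and>
   (\<forall>s\<in>space S. 0 \<le> (Ppol P p ^^ t) (\<lambda>s'. r s' (p s')) s \<and> (Ppol P p ^^ t) (\<lambda>s'. r s' (p s')) s \<le> 1)"
proof (induction t)
  case 0
  then show ?case using meas_rp r_bounds by auto
next
  case (Suc t)
  have eq: "(Ppol P p ^^ Suc t) g = Ppol P p ((Ppol P p ^^ t) g)" for g by simp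
  show ?case
    unfolding eq
  proof (intro conjI ballI)
    show "Ppol P p ((Ppol P p ^^ t) (\<lambda>s'. r s' (p s'))) \<in> borel_measurable S"
      using Suc meas_Ppol by blast
  next
    fix s assume s: "s \<in> space S"
    have "0 \<le> integral\<^sup>L (P s (p s)) ((Ppol P p ^^ t) (\<lambda>s'. r s' (p s'))) \<and>
      integral\<^sup>L (P s (p s)) ((Ppol P p ^^ t) (\<lambda>s'. r s' (p s'))) \<le> 1"
      by (rule int_bounds[OF s]) (use Suc in auto)
    then show "0 \<le> Ppol P p ((Ppol P p ^^ t) (\<lambda>s'. r s' (p s'))) s"
      "Ppol P p ((Ppol P p ^^ t) (\<lambda>s'. r s' (p s'))) s \<le> 1"
      by (auto simp: Ppol_def)
  qed
qed

lemma summ: "pol p \<Longrightarrow> s \<in> space S \<Longrightarrow> summable (\<lambda>t. \<gamma> ^ t * (Ppol P p ^^ t) (\<lambda>s'. r s' (p s')) s)"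
proof -
  assume p: "pol p" and s: "s \<in> space S"
  have b: "0 \<le> (Ppol P p ^^ t) (\<lambda>s'. r s' (p s')) s \<and> (Ppol P p ^^ t) (\<lambda>s'. r s' (p s')) s \<le> 1" for t
    using iter[OF p, of t] s by blast
  have n: "norm (\<gamma> ^ t * (Ppol P p ^^ t) (\<lambda>s'. r s' (p s')) s) \<le> \<gamma> ^ t" for t
  proof -
    have "norm (\<gamma> ^ t * (Ppol P p ^^ t) (\<lambda>s'. r s' (p s')) s) = \<gamma> ^ t * (Ppol P p ^^ t) (\<lambda>s'. r s' (p s')) s"
      using b[of t] gamma0 by (simp add: abs_mult)
    also have "\<dots> \<le> \<gamma> ^ t" using b[of t] gamma0 by (simp add: mult_left_le)
    finally show ?thesis .
  qed
  show ?thesis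
    by (rule summable_comparison_test[where g="\<lambda>t. \<gamma> ^ t"]) (use n gamma0 gamma1 in auto)
qed

lemma v_meas: "pol p \<Longrightarrow> v_pol P r \<gamma> p \<in> borel_measurable S"
  unfolding v_pol_def
  by (rule borel_measurable_suminf, rule borel_measurable_times) (use iter[of p] in auto)

lemma v_bounds: "pol p \<Longrightarrow> s \<in> space S \<Longrightarrow> 0 \<le> v_pol P r \<gamma> p s \<and> v_pol P r \<gamma> p s \<le> 1 / (1 - \<gamma>)"
proof -
  assume p: "pol p" and s: "s \<in> space S"
  have g: "(\<lambda>t. \<gamma> ^ t) sums (1 / (1 - \<gamma>))" using geometric_sums[of \<gamma>] gamma0 gamma1 by auto
  define f where "f t = \<gamma> ^ t * (Ppol P p ^^ t) (\<lambda>s'. r s' (p s')) s" for t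
  have su: "summable f" unfolding f_def by (rule summ[OF p s])
  have b: "0 \<le> (Ppol P p ^^ t) (\<lambda>s'. r s' (p s')) s \<and> (Ppol P p ^^ t) (\<lambda>s'. r s' (p s')) s \<le> 1" for t
    using iter[OF p, of t] s by blast
  have nn: "0 \<le> f t" for t unfolding f_def using b[of t] gamma0 by simp
  have le: "f t \<le> \<gamma> ^ t" for t unfolding f_def using b[of t] gamma0 by (simp add: mult_left_le)
  have "suminf f \<le> suminf (\<lambda>t. \<gamma> ^ t)" by (rule suminf_le[OF le su sums_summable[OF g]])
  also have "\<dots> = 1 / (1 - \<gamma>)" using sums_unique[OF g] by simp
  finally have "suminf f \<le> 1 / (1 - \<gamma>)" .
  moreover have "0 \<le> suminf f" by (rule suminf_nonneg[OF su nn])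
  moreover have "v_pol P r \<gamma> p s = suminf f" unfolding v_pol_def f_def by simp
  ultimately show ?thesis by simp
qed

lemma v_integ: "pol p \<Longrightarrow> s \<in> space S \<Longrightarrow> integrable (P s a) (v_pol P r \<gamma> p)"
  apply (rule integ_P[where B="1 / (1 - \<gamma>)", OF _ v_meas], assumption+)
  subgoal for x using v_bounds[of p x] by (simp add: abs_le_iff)
  done

lemma nb: "pol p \<Longrightarrow> s \<in> space S \<Longrightarrow> norm (\<gamma> ^ t * (Ppol P p ^^ t) (\<lambda>s'. r s' (p s')) s) \<le> \<gamma> ^ t"
proof -
  assume p: "pol p" and s: "s \<in> space S"
  have b: "0 \<le> (Ppol P p ^^ t) (\<lambda>s'. r s' (p s')) s \<and> (Ppol P p ^^ t) (\<lambda>s'. r s' (p s')) s \<le> 1"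
    using iter[OF p, of t] s by blast
  have "norm (\<gamma> ^ t * (Ppol P p ^^ t) (\<lambda>s'. r s' (p s')) s) = \<gamma> ^ t * (Ppol P p ^^ t) (\<lambda>s'. r s' (p s')) s"
    using b gamma0 by (simp add: abs_mult)
  also have "\<dots> \<le> \<gamma> ^ t" using b gamma0 by (simp add: mult_left_le)
  finally show ?thesis .
qed

lemma summ_norm: "pol p \<Longrightarrow> s \<in> space S \<Longrightarrow> summable (\<lambda>t. norm (\<gamma> ^ t * (Ppol P p ^^ t) (\<lambda>s'. r s' (p s')) s))"
  by (rule summable_comparison_test[where g="\<lambda>t. \<gamma> ^ t"]) (use nb gamma0 gamma1 in auto)

lemma bellman:
  assumes p: "pol p" and s: "s \<in> space S"
  shows "v_pol P r \<gamma> p s = r s (p s) + \<gamma> * integral\<^sup>L (P s (p s)) (v_pol P r \<gamma> p)"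
proof -
  define F where "F t = (Ppol P p ^^ t) (\<lambda>s'. r s' (p s'))" for t
  define M where "M = P s (p s)"
  define f where "f t = \<gamma> ^ t * F t s" for t
  have su: "summable f" unfolding f_def F_def by (rule summ[OF p s])
  have Fm: "F t \<in> borel_measurable S" for t using iter[OF p] unfolding F_def by blast
  have Fs: "F (Suc t) s = integral\<^sup>L M (F t)" for t unfolding F_def M_def by (simp add: Ppol_def)
  have fS: "f (Suc n) = \<gamma> * (\<gamma> ^ n * integral\<^sup>L M (F n))" for n
    unfolding f_def Fs by simp
  have f0: "f 0 = r s (p s)" unfolding f_def F_def by simp
  have v: "v_pol P r \<gamma> p s = suminf f" unfolding v_pol_def f_def F_def ..
  have i1: "integrable M (\<lambda>x. \<gamma> ^ i * F i x)" for i
    unfolding M_def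
    by (rule integ_P[OF s, where B="\<gamma> ^ i"]) (use Fm nb[OF p] in \<open>auto simp: F_def\<close>)
  have i1': "(\<lambda>x. \<gamma> ^ i * F i x) \<in> borel_measurable S" for i using Fm by measurable
  have i2: "AE x in M. summable (\<lambda>i. norm (\<gamma> ^ i * F i x))"
    by (rule AE_I2) (use summ_norm[OF p] in \<open>auto simp: M_def space_P[OF s] F_def\<close>)
  have i3b: "0 \<le> integral\<^sup>L M (\<lambda>x. norm (\<gamma> ^ i * F i x)) \<and> integral\<^sup>L M (\<lambda>x. norm (\<gamma> ^ i * F i x)) \<le> \<gamma> ^ i" for i
    unfolding M_def
    by (rule int_bounds[OF s]) (use i1' nb[OF p] in \<open>auto simp: F_def\<close>)
  have i3: "summable (\<lambda>i. integral\<^sup>L M (\<lambda>x. norm (\<gamma> ^ i * F i x)))"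
    by (rule summable_comparison_test[where g="\<lambda>t. \<gamma> ^ t"]) (use i3b gamma0 gamma1 in auto)
  have int_eq: "integral\<^sup>L M (\<lambda>x. \<Sum>i. \<gamma> ^ i * F i x) = (\<Sum>i. integral\<^sup>L M (\<lambda>x. \<gamma> ^ i * F i x))"
    by (rule integral_suminf[OF i1 i2 i3])
  have sm: "summable (\<lambda>i. integral\<^sup>L M (\<lambda>x. \<gamma> ^ i * F i x))"
    by (rule summable_integral[OF i1 i2 i3])
  have "suminf f = f 0 + (\<Sum>n. f (Suc n))" using suminf_split_head[OF su] by simp
  also have "(\<Sum>n. f (Suc n)) = \<gamma> * (\<Sum>n. \<gamma> ^ n * integral\<^sup>L M (F n))"
    unfolding fS by (rule suminf_mult) (use sm in simp)
  also have "(\<Sum>n. \<gamma> ^ n * integral\<^sup>L M (F n)) = integral\<^sup>L M (v_pol P r \<gamma> p)"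
    unfolding v_pol_def int_eq[folded F_def] F_def[symmetric] by simp
  finally show ?thesis using v f0 M_def by simp
qed

end

lemma meas_Least:
  fixes Q :: "'a::{finite,linorder} \<Rightarrow> 's \<Rightarrow> bool"
  assumes Qm: "\<And>a. Measurable.pred M (Q a)" and ex: "\<And>x. x \<in> space M \<Longrightarrow> \<exists>a. Q a x"
  shows "(\<lambda>x. LEAST a. Q a x) \<in> M \<rightarrow>\<^sub>M count_space UNIV"
proof (subst measurable_count_space_eq2[OF finite], intro conjI ballI)
  show "(\<lambda>x. LEAST a. Q a x) \<in> space M \<rightarrow> UNIV" by simp
  fix b :: 'a
  have "(\<lambda>x. LEAST a. Q a x) -` {b} \<inter> space M = {x\<in>space M. Q b x \<and> (\<forall>a\<in>{..<b}. \<not> Q a x)}"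
  proof (intro set_eqI iffI)
    fix x assume x: "x \<in> (\<lambda>x. LEAST a. Q a x) -` {b} \<inter> space M"
    then have xs: "x \<in> space M" and eq: "(LEAST a. Q a x) = b" by auto
    have LM: "(LEAST a. Q a x) = Min {a. Q a x}" by (rule Least_Min) (use ex[OF xs] in auto)
    have "Q (LEAST a. Q a x) x" unfolding LM using Min_in[of "{a. Q a x}"] ex[OF xs] by auto
    moreover have "\<not> Q a x" if "a < b" for a using Min_le[of "{a. Q a x}" a] that eq LM by (auto simp: not_le[symmetric])
    ultimately show "x \<in> {x\<in>space M. Q b x \<and> (\<forall>a\<in>{..<b}. \<not> Q a x)}" using xs eq by auto
  next
    fix x assume x: "x \<in> {x\<in>space M. Q b x \<and> (\<forall>a\<in>{..<b}. \<not> Q a x)}"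
    have "(LEAST a. Q a x) = b"
      by (rule Least_equality) (use x in \<open>auto simp: not_less[symmetric]\<close>)
    then show "x \<in> (\<lambda>x. LEAST a. Q a x) -` {b} \<inter> space M" using x by auto
  qed
  also have "\<dots> \<in> sets M"
  proof -
    have "Measurable.pred M (\<lambda>x. Q b x \<and> (\<forall>a\<in>{..<b}. \<not> Q a x))"
      using Qm[measurable] by measurable
    then show ?thesis by (simp add: pred_def)
  qed
  finally show "(\<lambda>x. LEAST a. Q a x) -` {b} \<inter> space M \<in> sets M" .
qed

theorem lemma3p4:
  fixes S :: "'s measure"
    and P :: "'s \<Rightarrow> 'a::{finite,linorder} \<Rightarrow> 's measure"
    and r :: "'s \<Rightarrow> 'a \<Rightarrow> real"
    and \<gamma> \<omega> \<Delta> :: real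
    and p :: "'s \<Rightarrow> 'a"
    and qh :: "'s \<Rightarrow> 'a \<Rightarrow> real"
    and Sfix :: "'s set"
  assumes kernel: "\<And>a. (\<lambda>s. P s a) \<in> S \<rightarrow>\<^sub>M prob_algebra S"
    and r_meas: "\<And>a. (\<lambda>s. r s a) \<in> borel_measurable S"
    and r_bounds: "\<And>s a. 0 \<le> r s a \<and> r s a \<le> 1"
    and gamma: "0 < \<gamma>" "\<gamma> < 1"
    and v_star_attained: "\<exists>pstar\<in>stationary_policies S.
                            \<forall>s\<in>space S. v_star S P r \<gamma> s = v_pol P r \<gamma> pstar s"
    and pi_pol: "p \<in> stationary_policies S"
    and qh_meas: "\<And>a. (\<lambda>s. qh s a) \<in> borel_measurable S"
    and Sfix: "Sfix \<in> sets S"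
    and omega: "\<omega> > 0"
    and Delta: "\<Delta> \<ge> 0"
    and approx: "\<forall>s\<in>space S - Sfix. \<forall>a. \<bar>qh s a - q_pol P r \<gamma> p s a\<bar> \<le> \<omega>"
    and nso: "next_state_delta_optimal_on S P r \<gamma> p \<Delta> (space S - Sfix)"
  shows "delta_optimal_on S P r \<gamma> (capi_update qh p Sfix \<omega>) (4 * \<omega> + \<gamma> * \<Delta>) (space S - Sfix)"
proof -
  interpret M: mdp S P r \<gamma> using kernel r_meas r_bounds gamma by unfold_locales auto
  define p' where "p' = capi_update qh p Sfix \<omega>"
  define Mx where "Mx s = Max (range (qh s))" for s
  define L where "L s = (LEAST a. qh s a = Mx s)" for s
  define C where "C s \<longleftrightarrow> s \<notin> Sfix \<and> qh s (p s) + \<omega> < Mx s - \<omega>" for s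
  have p'_eq: "p' s = (if C s then L s else p s)" for s
    unfolding p'_def capi_update_def C_def L_def Mx_def by simp
  have pp: "M.pol p" using pi_pol unfolding M.pol_def stationary_policies_def .
  obtain pstar where pst: "pstar \<in> stationary_policies S"
    and vst: "\<forall>s\<in>space S. v_star S P r \<gamma> s = v_pol P r \<gamma> pstar s" using v_star_attained by blast
  have ppst: "M.pol pstar" using pst unfolding M.pol_def stationary_policies_def .
  have Mx_ge: "qh s a \<le> Mx s" for s a unfolding Mx_def by (rule Max_ge) auto
  have Mx_ex: "\<exists>a. qh s a = Mx s" for s
  proof -
    have "Mx s \<in> range (qh s)" unfolding Mx_def by (rule Max_in) auto
    then show ?thesis by auto
  qed
  have L_eq: "qh s (L s) = Mx s" for s
  proof -
    have LM: "L s = Min {a. qh s a = Mx s}" unfolding L_def by (rule Least_Min) (use Mx_ex in auto)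
    show ?thesis unfolding LM using Min_in[of "{a. qh s a = Mx s}"] Mx_ex[of s] by auto
  qed
  have Mx_meas: "Mx \<in> borel_measurable S"
    using borel_measurable_Max[of UNIV "\<lambda>a s. qh s a" S] qh_meas unfolding Mx_def by (simp add: image_def)
  have qp_meas: "(\<lambda>s. qh s (p s)) \<in> borel_measurable S"
    by (rule measurable_compose_countable[where f="\<lambda>a s. qh s a"], rule qh_meas, use pi_pol in \<open>simp add: stationary_policies_def\<close>)
  have pp': "M.pol p'"
  proof -
    have Lm: "L \<in> S \<rightarrow>\<^sub>M count_space UNIV" unfolding L_def
    proof (rule meas_Least)
      fix a
      show "Measurable.pred S (\<lambda>x. qh x a = Mx x)" using qh_meas[of a] Mx_meas by measurable
    qed (use Mx_ex in auto)
    have Cm: "{x\<in>space S. C x} \<in> sets S"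
    proof -
      have "Measurable.pred S C" unfolding C_def using Sfix Mx_meas qp_meas by measurable
      then show ?thesis by (simp add: pred_def)
    qed
    have "(\<lambda>s. if C s then L s else p s) \<in> S \<rightarrow>\<^sub>M count_space UNIV"
      by (rule measurable_If[OF Lm _ Cm]) (use pi_pol in \<open>simp add: stationary_policies_def\<close>)
    then show ?thesis unfolding M.pol_def p'_eq[abs_def] .
  qed
  have apx: "qh s a - \<omega> \<le> q_pol P r \<gamma> p s a \<and> q_pol P r \<gamma> p s a \<le> qh s a + \<omega>" if "s \<in> space S - Sfix" for s a
  proof -
    have "\<bar>qh s a - q_pol P r \<gamma> p s a\<bar> \<le> \<omega>" using approx that by blast
    then show ?thesis by linarith
  qed
  define v where "v = v_pol P r \<gamma> p"
  define v' where "v' = v_pol P r \<gamma> p'"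
  have q_eq: "q_pol P r \<gamma> p s a = r s a + \<gamma> * integral\<^sup>L (P s a) v" for s a
    unfolding q_pol_def v_def ..
  have v_q: "v s = q_pol P r \<gamma> p s (p s)" if "s \<in> space S" for s
    unfolding q_eq v_def using M.bellman[OF pp that] .
  have c1: "v s \<le> q_pol P r \<gamma> p s (p' s)" if s: "s \<in> space S" for s
  proof (cases "C s")
    case True
    then have sS: "s \<in> space S - Sfix" using s C_def by auto
    have "v s = q_pol P r \<gamma> p s (p s)" using v_q[OF s] .
    also have "\<dots> \<le> qh s (p s) + \<omega>" using apx[OF sS, of "p s"] apx[OF sS, of "p' s"] by linarith
    also have "\<dots> < Mx s - \<omega>" using True C_def by auto
    also have "\<dots> = qh s (p' s) - \<omega>" using True p'_eq L_eq by simp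
    also have "\<dots> \<le> q_pol P r \<gamma> p s (p' s)" using apx[OF sS, of "p s"] apx[OF sS, of "p' s"] by linarith
    finally show ?thesis by simp
  next
    case False
    then show ?thesis using v_q[OF s] p'_eq by simp
  qed
  have c2: "v s \<le> v' s" if s: "s \<in> space S" for s
  proof -
    define d where "d x = v' x - v x" for x
    have dm: "d \<in> borel_measurable S" unfolding d_def v'_def v_def
      using M.v_meas[OF pp] M.v_meas[OF pp'] by measurable
    have db: "- (1 / (1 - \<gamma>)) \<le> d x \<and> d x \<le> 1 / (1 - \<gamma>)" if "x \<in> space S" for x
      using M.v_bounds[OF pp that] M.v_bounds[OF pp' that] unfolding d_def v_def v'_def by auto
    have dge: "\<gamma> * integral\<^sup>L (P x (p' x)) d \<le> d x" if x: "x \<in> space S" for x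
    proof -
      have e1: "integral\<^sup>L (P x (p' x)) d = integral\<^sup>L (P x (p' x)) v' - integral\<^sup>L (P x (p' x)) v"
        unfolding d_def v_def v'_def
        by (rule Bochner_Integration.integral_diff[OF M.v_integ[OF pp' x] M.v_integ[OF pp x]])
      have e2: "v' x = r x (p' x) + \<gamma> * integral\<^sup>L (P x (p' x)) v'"
        unfolding v'_def by (rule M.bellman[OF pp' x])
      have e3: "v x \<le> r x (p' x) + \<gamma> * integral\<^sup>L (P x (p' x)) v"
        using c1[OF x] q_eq by simp
      have "\<gamma> * integral\<^sup>L (P x (p' x)) d = \<gamma> * integral\<^sup>L (P x (p' x)) v' - \<gamma> * integral\<^sup>L (P x (p' x)) v"
        unfolding e1 by (simp add: right_diff_distrib)
      then show ?thesis using e2 e3 unfolding d_def by linarith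
    qed
    define m where "m = Inf (d ` space S)"
    have bdd: "bdd_below (d ` space S)" using db by (auto intro: bdd_belowI2[where m="- (1 / (1 - \<gamma>))"])
    have ne: "space S \<noteq> {}" using s by auto
    have mle: "m \<le> d x" if "x \<in> space S" for x unfolding m_def by (rule cINF_lower[OF bdd that])
    have gm: "\<gamma> * m \<le> d x" if x: "x \<in> space S" for x
    proof -
      have "m \<le> integral\<^sup>L (P x (p' x)) d"
        using M.int_bounds[OF x dm, of m "1 / (1 - \<gamma>)" "p' x"] mle db by auto
      then have "\<gamma> * m \<le> \<gamma> * integral\<^sup>L (P x (p' x)) d" using gamma by simp
      then show ?thesis using dge[OF x] by simp
    qed
    have "\<gamma> * m \<le> Inf (d ` space S)" by (rule cINF_greatest[OF ne gm])
    then have "\<gamma> * m \<le> m" by (simp add: m_def)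
    then have "0 \<le> (1 - \<gamma>) * m" by (simp add: algebra_simps)
    then have "0 \<le> m" using gamma by (simp add: zero_le_mult_iff)
    then show ?thesis using mle[OF s] unfolding d_def by simp
  qed
  show ?thesis unfolding delta_optimal_on_def p'_def[symmetric]
  proof
    fix s assume sS: "s \<in> space S - Sfix"
    then have s: "s \<in> space S" by simp
    have c3: "q_pol P r \<gamma> p s (p' s) \<le> v_pol P r \<gamma> p' s"
    proof -
      have "integral\<^sup>L (P s (p' s)) v \<le> integral\<^sup>L (P s (p' s)) v'"
        unfolding v_def v'_def
        by (rule integral_mono[OF M.v_integ[OF pp s] M.v_integ[OF pp' s]])
           (use c2 M.space_P[OF s] in \<open>auto simp: v_def v'_def\<close>)
      then show ?thesis unfolding q_eq using M.bellman[OF pp' s] gamma unfolding v'_def by simp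
    qed
    have c4: "q_pol P r \<gamma> p s a - 4 * \<omega> \<le> q_pol P r \<gamma> p s (p' s)" for a
    proof (cases "C s")
      case True
      have "q_pol P r \<gamma> p s a \<le> qh s a + \<omega>" using apx[OF sS, of a] apx[OF sS, of "p s"] apx[OF sS, of "p' s"] by linarith
      also have "\<dots> \<le> Mx s + \<omega>" using Mx_ge by simp
      also have "\<dots> = qh s (p' s) + \<omega>" using True p'_eq L_eq by simp
      also have "\<dots> \<le> q_pol P r \<gamma> p s (p' s) + 2 * \<omega>" using apx[OF sS, of a] apx[OF sS, of "p s"] apx[OF sS, of "p' s"] by linarith
      finally show ?thesis using omega by simp
    next
      case False
      then have pe: "p' s = p s" and nc: "Mx s - 2 * \<omega> \<le> qh s (p s)" using p'_eq sS C_def by auto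
      have "q_pol P r \<gamma> p s a \<le> qh s a + \<omega>" using apx[OF sS, of a] apx[OF sS, of "p s"] apx[OF sS, of "p' s"] by linarith
      also have "\<dots> \<le> Mx s + \<omega>" using Mx_ge by simp
      also have "\<dots> \<le> qh s (p s) + 3 * \<omega>" using nc by simp
      also have "\<dots> \<le> q_pol P r \<gamma> p s (p s) + 4 * \<omega>" using apx[OF sS, of a] apx[OF sS, of "p s"] apx[OF sS, of "p' s"] by linarith
      finally show ?thesis using pe by simp
    qed
    have c5: "v_star S P r \<gamma> s - q_pol P r \<gamma> p s (pstar s) \<le> \<gamma> * \<Delta>"
    proof -
      have "integral\<^sup>L (P s (pstar s)) (v_pol P r \<gamma> pstar) - integral\<^sup>L (P s (pstar s)) v
          = integral\<^sup>L (P s (pstar s)) (\<lambda>x. v_pol P r \<gamma> pstar x - v x)"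
        unfolding v_def by (rule Bochner_Integration.integral_diff[symmetric, OF M.v_integ[OF ppst s] M.v_integ[OF pp s]])
      also have "\<dots> = integral\<^sup>L (P s (pstar s)) (\<lambda>x. v_star S P r \<gamma> x - v_pol P r \<gamma> p x)"
        by (rule Bochner_Integration.integral_cong) (use vst M.space_P[OF s] v_def in auto)
      also have "\<dots> \<le> \<Delta>" using nso sS unfolding next_state_delta_optimal_on_def by blast
      finally have "integral\<^sup>L (P s (pstar s)) (v_pol P r \<gamma> pstar) - integral\<^sup>L (P s (pstar s)) v \<le> \<Delta>" .
      then have "\<gamma> * (integral\<^sup>L (P s (pstar s)) (v_pol P r \<gamma> pstar) - integral\<^sup>L (P s (pstar s)) v) \<le> \<gamma> * \<Delta>"
        using gamma by (simp add: mult_left_mono)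
      moreover have "v_star S P r \<gamma> s = r s (pstar s) + \<gamma> * integral\<^sup>L (P s (pstar s)) (v_pol P r \<gamma> pstar)"
        using vst s M.bellman[OF ppst s] by simp
      ultimately show ?thesis unfolding q_eq by (simp add: algebra_simps)
    qed
    show "v_star S P r \<gamma> s - v_pol P r \<gamma> p' s \<le> 4 * \<omega> + \<gamma> * \<Delta>"
      using c3 c4[of "pstar s"] c5 by simp
  qed
qed

end
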